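(* Let $s=\sigma+it$ with $\sigma\ge 1/2$ and $t\ge 14.1347$. Then \[ \Big|\zeta(s)-\sum_{1\le n<t}\frac{1}{n^s}\Big|\le c_0\,t^{-\sigma},\qquad c_0=2.1946. \]
   Context: $\zeta$ is the Riemann zeta function. *)

theory Defs
  imports "HOL-Analysis.Analysis"
begin

text \<open>Riemann zeta function on the half-plane Re s > 0, s \<noteq> 1 (its analytic
  continuation there), via the classical formula
  zeta(s) = lim_{N\<rightarrow>\<infinity>} ( sum_{n=1}^N n^(-s) - N^(1-s)/(1-s) ),
  valid for Re s > 0, s \<noteq> 1; for Re s > 1 it is the Dirichlet series sum n^(-s).\<close>
definition riemann_zeta :: "complex \<Rightarrow> complex" where
  "riemann_zeta s = lim (\<lambda>N. (\<Sum>n=1..N. 1 / (of_nat n powr s))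
                           - of_nat N powr (1 - s) / (1 - s))"

end

theory Submission
  imports Defs "HOL-Analysis.Analysis"
begin

lemma taylor5:
  fixes w :: complex
  shows "norm (exp w - (1 + w + w^2/2 + w^3/6 + w^4/24 + w^5/120)) \<le> exp (norm w) * norm w ^ 6 / 120"
proof -
  have "norm (exp w - (\<Sum>k\<le>5. w ^ k / fact k)) \<le> exp \<bar>Re w\<bar> * norm w ^ Suc 5 / fact 5"
    by (rule Taylor_exp)
  also have "exp \<bar>Re w\<bar> \<le> exp (norm w)" using abs_Re_le_cmod by simp
  hence "exp \<bar>Re w\<bar> * norm w ^ Suc 5 / fact 5 \<le> exp (norm w) * norm w ^ 6 / 120"
    by (simp add: fact_numeral divide_right_mono mult_right_mono)
  finally show ?thesis
    by (simp add: atMost_nat_numeral fact_numeral add_ac)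
qed

lemma SC_bounds:
  fixes w :: complex
  defines "r \<equiv> norm w"
  shows "norm ((exp w - exp (-w)) - (2*w + w^3/3 + w^5/60)) \<le> exp r * r^6/60"
    and "norm ((exp w + exp (-w)) - (2 + w^2 + w^4/12)) \<le> exp r * r^6/60"
proof -
  have a: "norm (exp w - (1 + w + w^2/2 + w^3/6 + w^4/24 + w^5/120)) \<le> exp r * r ^ 6 / 120"
    using taylor5[of w] by (simp add: r_def)
  have b: "norm (exp (-w) - (1 + (-w) + (-w)^2/2 + (-w)^3/6 + (-w)^4/24 + (-w)^5/120)) \<le> exp r * r ^ 6 / 120"
    using taylor5[of "-w"] by (simp add: r_def)
  have "(exp w - exp (-w)) - (2*w + w^3/3 + w^5/60) =
     (exp w - (1 + w + w^2/2 + w^3/6 + w^4/24 + w^5/120)) - (exp (-w) - (1 + (-w) + (-w)^2/2 + (-w)^3/6 + (-w)^4/24 + (-w)^5/120))"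
    by (simp add: power_minus_odd power_minus_even field_simps)
  also have "norm \<dots> \<le> exp r * r ^ 6 / 120 + exp r * r ^ 6 / 120"
    by (rule order_trans[OF norm_triangle_ineq4 add_mono[OF a b]])
  finally show "norm ((exp w - exp (-w)) - (2*w + w^3/3 + w^5/60)) \<le> exp r * r^6/60" by simp
  have "(exp w + exp (-w)) - (2 + w^2 + w^4/12) =
     (exp w - (1 + w + w^2/2 + w^3/6 + w^4/24 + w^5/120)) + (exp (-w) - (1 + (-w) + (-w)^2/2 + (-w)^3/6 + (-w)^4/24 + (-w)^5/120))"
    by (simp add: power_minus_odd power_minus_even field_simps)
  also have "norm \<dots> \<le> exp r * r ^ 6 / 120 + exp r * r ^ 6 / 120"
    by (rule order_trans[OF norm_triangle_ineq add_mono[OF a b]])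
  finally show "norm ((exp w + exp (-w)) - (2 + w^2 + w^4/12)) \<le> exp r * r^6/60" by simp
qed

definition hf :: "complex \<Rightarrow> complex" where
  "hf z = 1/(1 - exp(-z)) - 1/z - 1/2"
definition hfd :: "complex \<Rightarrow> complex" where
  "hfd z = 1/z^2 - exp(-z)/(1 - exp(-z))^2"

lemma aux1: "(w::complex) \<noteq> 0 \<Longrightarrow> Q \<noteq> 0 \<Longrightarrow> (2*(1+p) + 2*w*Q)/2/(2*w*Q) - 1/(2*w) - 1/2 = (p - (Q - 1))/(2*w*Q)"
  by (simp add: divide_simps)
lemma aux2: "(w::complex) \<noteq> 0 \<Longrightarrow> Q \<noteq> 0 \<Longrightarrow> 1/(4*w^2) - 1/(2*w*Q)^2 = (Q-1)*(2+(Q-1))/(4*w^2*Q^2)"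
  apply (simp add: divide_simps)
  apply (simp add: algebra_simps power2_eq_square)
  done

lemma hf_bounds:
  fixes z :: complex
  assumes "z \<noteq> 0" "norm z \<le> 3/2"
  shows "norm (hf z) \<le> 11/100 * norm z" "norm (hfd z) \<le> 12/100"
proof -
  define w where "w = z/2"
  define r where "r = norm w"
  have zw: "z = 2*w" by (simp add: w_def)
  have r0: "r > 0" using assms by (simp add: r_def w_def)
  have r1: "r \<le> 3/4" using assms by (simp add: r_def w_def norm_divide)
  have r2: "r^2 \<le> 9/16" using power_mono[OF r1, of 2] r0 by (simp add: power2_eq_square)
  have r3: "r^3 \<le> 27/64" using power_mono[OF r1, of 3] r0 by (simp add: eval_nat_numeral)
  have r4: "r^4 \<le> 81/256" using power_mono[OF r1, of 4] r0 by (simp add: eval_nat_numeral)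
  have r42: "r^4 \<le> (9/16)*r^2"
  proof -
    have "r^4 = r^2 * r^2" by (simp add: eval_nat_numeral)
    also have "\<dots> \<le> (9/16)*r^2" using r2 by (intro mult_right_mono) auto
    finally show ?thesis .
  qed
  have r52: "r^5 \<le> (27/64)*r^2"
  proof -
    have "r^5 = r^3 * r^2" by (simp add: eval_nat_numeral)
    also have "\<dots> \<le> (27/64)*r^2" using r3 by (intro mult_right_mono) auto
    finally show ?thesis .
  qed
  have r62: "r^6 \<le> (81/256)*r^2"
  proof -
    have "r^6 = r^4 * r^2" by (simp add: eval_nat_numeral)
    also have "\<dots> \<le> (81/256)*r^2" using r4 by (intro mult_right_mono) auto
    finally show ?thesis .
  qed
  have w0: "w \<noteq> 0" using r0 r_def by auto
  have er: "exp r \<le> 3"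
  proof -
    have "exp r \<le> exp 1" using r1 by simp
    thus ?thesis using exp_le by linarith
  qed
  define E where "E = exp w"
  define F where "F = exp (-w)"
  have EF: "E * F = 1" by (simp add: E_def F_def flip: exp_add)
  define S where "S = E - F"
  define C where "C = E + F"
  define q where "q = S/(2*w) - 1"
  define p where "p = C/2 - 1"
  have Sq: "S = 2*w*(1+q)" using w0 by (simp add: q_def field_simps)
  have Cp: "C = 2*(1+p)" by (simp add: p_def field_simps)
  have SB: "norm (S - (2*w + w^3/3 + w^5/60)) \<le> exp r * r^6/60"
    using SC_bounds(1)[of w] by (simp add: S_def E_def F_def r_def)
  have CB: "norm (C - (2 + w^2 + w^4/12)) \<le> exp r * r^6/60"
    using SC_bounds(2)[of w] by (simp add: C_def E_def F_def r_def)
  have qeq: "q - (w^2/6 + w^4/120) = (S - (2*w + w^3/3 + w^5/60)) / (2*w)"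
    using w0 by (simp add: q_def field_simps eval_nat_numeral)
  have qrem: "norm (q - (w^2/6 + w^4/120)) \<le> exp r * r^5/120"
  proof -
    have "norm (q - (w^2/6 + w^4/120)) = norm (S - (2*w + w^3/3 + w^5/60)) / (2*r)"
      by (simp add: qeq norm_divide norm_mult r_def)
    also have "\<dots> \<le> (exp r * r^6/60) / (2*r)"
      using r0 by (intro divide_right_mono[OF SB]) simp
    also have "\<dots> = exp r * r^5/120" using r0 by (simp add: field_simps power_eq_if)
    finally show ?thesis .
  qed
  have peq: "p - (w^2/2 + w^4/24) = (C - (2 + w^2 + w^4/12)) / 2"
    by (simp add: p_def field_simps)
  have prem: "norm (p - (w^2/2 + w^4/24)) \<le> exp r * r^6/120"
    using CB by (simp add: peq norm_divide)
  have nq: "norm q \<le> r^2/6 + r^4/120 + exp r * r^5/120"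
  proof -
    have "norm q \<le> norm (w^2/6 + w^4/120) + norm (q - (w^2/6 + w^4/120))"
      using norm_triangle_ineq[of "w^2/6 + w^4/120" "q - (w^2/6 + w^4/120)"] by simp
    also have "norm (w^2/6 + w^4/120) \<le> r^2/6 + r^4/120"
      by (rule order_trans[OF norm_triangle_ineq]) (simp add: norm_divide norm_power r_def)
    finally show ?thesis using qrem by simp
  qed
  have a: "norm q \<le> 182/1000 * r^2"
  proof -
    have "r^4/120 \<le> (9/16)*r^2/120" using r42 by simp
    moreover have "exp r * r^5/120 \<le> 3 * ((27/64) * r^2)/120"
      using er r0 r52 by (intro divide_right_mono mult_mono) auto
    moreover have "r^2 \<ge> 0" by simp
    ultimately show ?thesis using nq by linarith
  qed
  have pq: "norm (p - q) \<le> 371/1000 * r^2"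
  proof -
    have "p - q = (w^2/3 + w^4/30) + (p - (w^2/2 + w^4/24)) - (q - (w^2/6 + w^4/120))"
      by (simp add: field_simps)
    hence "norm (p - q) \<le> norm (w^2/3 + w^4/30) + norm (p - (w^2/2 + w^4/24)) + norm (q - (w^2/6 + w^4/120))"
      using norm_triangle_ineq4[of "(w^2/3 + w^4/30) + (p - (w^2/2 + w^4/24))" "q - (w^2/6 + w^4/120)"]
            norm_triangle_ineq[of "w^2/3 + w^4/30" "p - (w^2/2 + w^4/24)"] by simp
    also have "norm (w^2/3 + w^4/30) \<le> r^2/3 + r^4/30"
      by (rule order_trans[OF norm_triangle_ineq]) (simp add: norm_divide norm_power r_def)
    finally have "norm (p - q) \<le> r^2/3 + r^4/30 + exp r * r^6/120 + exp r * r^5/120"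
      using prem qrem by simp
    moreover have "exp r * r^6/120 \<le> 3 * ((81/256)*r^2)/120"
      using er r0 r62 by (intro divide_right_mono mult_mono) auto
    moreover have "exp r * r^5/120 \<le> 3 * ((27/64) * r^2)/120"
      using er r0 r52 by (intro divide_right_mono mult_mono) auto
    moreover have "r^2 \<ge> 0" by simp
    ultimately show ?thesis using r42 by linarith
  qed
  have ar: "182/1000 * r^2 \<le> 182/1000 * (9/16)"
    using r2 by simp
  have q1: "norm (1 + q) \<ge> 1 - 182/1000 * r^2"
    using a norm_triangle_ineq2[of 1 "-q"] by simp
  have q1': "norm (1+q) \<ge> 8976/10000" using q1 ar by simp
  have Em: "exp (-z) = F * F" by (simp add: zw F_def flip: exp_add)
  have Einv: "E = 1/F" by (simp add: E_def F_def exp_minus divide_inverse)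
  have F0: "F \<noteq> 0" by (simp add: F_def)
  have S0: "S \<noteq> 0" using q1' Sq w0 by auto
  have oneF: "1 - exp (-z) = F * S" using EF by (simp add: Em S_def algebra_simps)
  have q1ne: "1 + q \<noteq> 0" using q1' by auto
  have hfeq: "hf z = (p - q) / (2*w*(1+q))"
  proof -
    have "hf z = 1/(F*S) - 1/z - 1/2" unfolding hf_def oneF by simp
    also have "1/(F*S) = E/S" using F0 Einv by simp
    also have "E/S - 1/z - 1/2 = (C + S)/2/S - 1/(2*w) - 1/2" by (simp add: C_def S_def zw)
    also have "(C + S)/2/S - 1/(2*w) - 1/2 = (p - q)/(2*w*(1+q))"
      unfolding Sq Cp using aux1[OF w0 q1ne, of p] by simp
    finally show ?thesis .
  qed
  show "norm (hf z) \<le> 11/100 * norm z"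
  proof -
    have "norm (hf z) = norm (p - q) / (2*r*norm (1+q))"
      by (simp add: hfeq norm_divide norm_mult r_def)
    also have "\<dots> \<le> (371/1000 * r^2) / (2*r*(8976/10000))"
      using pq q1' r0 by (intro frac_le) auto
    also have "\<dots> \<le> 11/100 * (2*r)" using r0 by (simp add: power2_eq_square field_simps)
    finally show ?thesis by (simp add: zw r_def)
  qed
  show "norm (hfd z) \<le> 12/100"
  proof -
    have "hfd z = 1/z^2 - (F*F)/(F*S)^2"
      unfolding hfd_def oneF unfolding Em by simp
    also have "\<dots> = 1/(4*w^2) - 1/S^2"
      using F0 S0 by (simp add: zw field_simps power2_eq_square)
    also have "\<dots> = q*(2+q)/(4*w^2*(1+q)^2)"
      unfolding Sq using aux2[OF w0 q1ne] by simp
    finally have "norm (hfd z) = norm q * norm (2+q) / (4*r^2*norm (1+q)^2)"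
      by (simp add: norm_divide norm_mult norm_power r_def)
    also have "\<dots> \<le> (182/1000 * r^2) * (2 + 182/1000*(9/16)) / (4*r^2*(8976/10000)^2)"
    proof -
      have n2: "norm (2+q) \<le> 2 + 182/1000*(9/16)"
        using norm_triangle_ineq[of 2 q] a ar by simp
      have den: "4 * r\<^sup>2 * (8976 / 10000)\<^sup>2 \<le> 4 * r\<^sup>2 * (cmod (1 + q))\<^sup>2"
        using q1' r0 by (intro mult_left_mono power_mono) auto
      have num: "norm q * norm (2+q) \<le> (182/1000 * r^2) * (2 + 182/1000*(9/16))"
        using a n2 by (intro mult_mono) auto
      show ?thesis by (rule frac_le[OF _ num _ den]) (use r0 in auto)
    qed
    also have "\<dots> \<le> 12/100" using r0 by (simp add: field_simps)
    finally show ?thesis .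
  qed
qed

lemma ln_lower: fixes u :: real assumes "0 \<le> u" shows "2*u/(2+u) \<le> ln (1+u)"
proof -
  have "(\<lambda>x. ln (1+x) - 2*x/(2+x)) 0 \<le> (\<lambda>x. ln (1+x) - 2*x/(2+x)) u"
  proof (rule deriv_nonneg_imp_mono[where g = "\<lambda>x. ln (1+x) - 2*x/(2+x)" and g' = "\<lambda>x. 1/(1+x) - 4/(2+x)^2"])
    fix x assume x: "x \<in> {0..u}"
    hence x0: "0 \<le> x" by simp
    show "((\<lambda>x. ln (1+x) - 2*x/(2+x)) has_real_derivative 1/(1+x) - 4/(2+x)^2) (at x)"
      using x0 apply -
      apply (rule derivative_eq_intros refl | simp)+
      apply (simp add: divide_simps power2_eq_square)
      done
    have "1/(1+x) - 4/(2+x)^2 = x^2/((1+x)*(2+x)^2)" using x0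
      by (simp add: divide_simps power2_eq_square) (simp add: algebra_simps)
    thus "1/(1+x) - 4/(2+x)^2 \<ge> 0" using x0 by simp
  qed (use assms in auto)
  thus ?thesis by simp
qed

lemma ln_upper: fixes u :: real assumes "0 \<le> u" shows "ln (1+u) \<le> u*(2+u)/(2*(1+u))"
proof -
  have "(\<lambda>x. x*(2+x)/(2*(1+x)) - ln (1+x)) 0 \<le> (\<lambda>x. x*(2+x)/(2*(1+x)) - ln (1+x)) u"
  proof (rule deriv_nonneg_imp_mono[where g = "\<lambda>x. x*(2+x)/(2*(1+x)) - ln (1+x)" and g' = "\<lambda>x. x^2/(2*(1+x)^2)"])
    fix x assume x: "x \<in> {0..u}"
    hence x0: "0 \<le> x" by simp
    show "((\<lambda>x. x*(2+x)/(2*(1+x)) - ln (1+x)) has_real_derivative x^2/(2*(1+x)^2)) (at x)"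
      using x0 apply -
      apply (rule derivative_eq_intros refl | simp)+
      apply (simp add: divide_simps power2_eq_square)
      apply (simp add: algebra_simps)
      done
    show "x^2/(2*(1+x)^2) \<ge> 0" using x by simp
  qed (use assms in auto)
  thus ?thesis by simp
qed

lemma aux_eq1: "(n::real) \<ge> 1 \<Longrightarrow> (1/n)*(2+1/n)/(2*(1+1/n)) = 1/(n + 1/2 - 1/(2*(2*n+1)))"
  apply (simp add: divide_simps)
  apply (simp add: algebra_simps)
  apply (smt (verit) mult_pos_pos)
  done

definition ell :: "nat \<Rightarrow> real" where "ell n = ln (1 + 1/real n)"

lemma ell_pos: "n \<ge> 1 \<Longrightarrow> ell n > 0" unfolding ell_def by (intro ln_gt_zero) auto
lemma ell_le: "n \<ge> 1 \<Longrightarrow> ell n \<le> 1/real n"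
  unfolding ell_def by (rule ln_add_one_self_le_self) simp
lemma ell_inv_upper: assumes "n \<ge> 1" shows "1/ell n \<le> real n + 1/2"
proof -
  have "2*(1/real n)/(2+1/real n) \<le> ell n" unfolding ell_def by (rule ln_lower) simp
  moreover have "2*(1/real n)/(2+1/real n) = 1/(real n + 1/2)" using assms by (simp add: divide_simps)
  ultimately have "1/(real n + 1/2) \<le> ell n" by simp
  thus ?thesis using assms ell_pos[OF assms]
    by (simp add: divide_simps) (simp add: mult.commute)
qed
lemma ell_inv_lower: assumes "n \<ge> 1" shows "real n + 1/2 - 1/(2*(2*real n+1)) \<le> 1/ell n"
proof -
  have "ell n \<le> (1/real n)*(2+1/real n)/(2*(1+1/real n))" unfolding ell_def by (rule ln_upper) simp
  moreover have "(1/real n)*(2+1/real n)/(2*(1+1/real n)) = 1/(real n + 1/2 - 1/(2*(2*real n+1)))"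
    using assms by (intro aux_eq1) simp
  moreover have pos: "real n + 1/2 - 1/(2*(2*real n+1)) > 0"
  proof -
    have "1/(2*(2*real n+1)) \<le> 1/2" using assms by (intro divide_left_mono) auto
    thus ?thesis using assms by linarith
  qed
  ultimately have "ell n \<le> 1/(real n + 1/2 - 1/(2*(2*real n+1)))" by simp
  thus ?thesis using assms ell_pos[OF assms] pos
    by (simp add: divide_simps) (simp add: mult.commute)
qed
lemma ell_mono: assumes "1 \<le> m" "m \<le> n" shows "ell n \<le> ell m"
proof -
  have "1/real n \<le> 1/real m" using assms by (intro divide_left_mono) auto
  moreover have "0 < 1 + 1/real n" "0 < 1 + 1/real m" by (auto intro: add_pos_nonneg)
  ultimately show ?thesis unfolding ell_def by simp
qed

lemma delta_bound: assumes "n \<ge> 2" shows "\<bar>1/ell n - 1/ell (n-1) - 1\<bar> \<le> 1/(2*real n)"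
proof -
  have n1: "n - 1 \<ge> 1" using assms by simp
  have rn: "real (n-1) = real n - 1" using assms by simp
  note a = ell_inv_upper[of n] ell_inv_lower[of n] ell_inv_upper[OF n1] ell_inv_lower[OF n1]
  have "1/ell n - 1/ell (n-1) - 1 \<le> 1/(2*(2*real n - 1))" using a assms by (simp add: rn)
  moreover have "1/ell n - 1/ell (n-1) - 1 \<ge> - 1/(2*(2*real n + 1))" using a assms by (simp add: rn)
  moreover have "1/(2*(2*real n - 1)) \<le> 1/(2*real n)" using assms by (simp add: frac_le)
  moreover have "1/(2*(2*real n + 1)) \<le> 1/(2*real n)" using assms by (simp add: frac_le)
  ultimately show ?thesis by linarith
qed

definition a :: "complex \<Rightarrow> nat \<Rightarrow> complex" where
  "a s n = exp (- (s * of_real (ln (real n))))"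

lemma a_powr: assumes "n \<ge> 1" shows "1 / (of_nat n powr s) = a s n"
proof -
  have "(of_nat n :: complex) powr s = exp (s * of_real (ln (real n)))"
    using assms by (simp add: powr_def)
  thus ?thesis by (simp add: a_def exp_minus divide_inverse)
qed

lemma a_norm: assumes "n \<ge> 1" shows "norm (a s n) = real n powr (- Re s)"
  using assms by (simp add: a_def norm_exp_eq_Re powr_def)

lemma ln_Suc_ell: assumes "n \<ge> 1" shows "ln (real (Suc n)) = ln (real n) + ell n"
proof -
  have "1 + 1/real n = real (Suc n) / real n" using assms by (simp add: field_simps)
  hence "ell n = ln (real (Suc n)) - ln (real n)" using assms by (simp add: ell_def ln_div)
  thus ?thesis by simp
qed

lemma a_Suc: assumes "n \<ge> 1" shows "a s (Suc n) = a s n * exp (- (s * of_real (ell n)))"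
  unfolding a_def ln_Suc_ell[OF assms] by (simp add: distrib_left exp_add[symmetric] algebra_simps)

lemma Npowr: assumes "N \<ge> 1" shows "of_nat N powr (1 - s) = of_nat N * a s N"
proof -
  have "(of_nat N :: complex) powr (1 - s) = exp ((1 - s) * of_real (ln (real N)))"
    using assms by (simp add: powr_def)
  also have "\<dots> = exp (of_real (ln (real N))) * a s N"
    by (simp add: a_def exp_add[symmetric] algebra_simps)
  also have "exp (of_real (ln (real N)) :: complex) = of_nat N"
    using assms by (simp add: exp_of_real flip: of_real_exp)
  finally show ?thesis .
qed

lemma exp_ne1: assumes "Re z > 0" shows "exp (- z) \<noteq> 1"
  using assms by (simp add: exp_eq_1)

definition L :: "complex \<Rightarrow> nat \<Rightarrow> complex" where "L s n = s * of_real (ell n)"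
definition cc :: "complex \<Rightarrow> nat \<Rightarrow> complex" where "cc s n = 1 / (1 - exp (- L s n))"

lemma L_re: assumes "Re s > 0" "n \<ge> 1" shows "Re (L s n) > 0"
  using assms ell_pos[OF assms(2)] by (simp add: L_def)

lemma L_norm: assumes "n \<ge> 1" shows "norm (L s n) \<le> norm s / real n"
proof -
  have "norm (L s n) = norm s * ell n" using ell_pos[OF assms] by (simp add: L_def norm_mult)
  also have "\<dots> \<le> norm s * (1/real n)" by (intro mult_left_mono ell_le assms) simp
  finally show ?thesis by simp
qed

lemma one_minus_ne: assumes "Re s > 0" "n \<ge> 1" shows "1 - exp (- L s n) \<noteq> 0"
  using exp_ne1[OF L_re[OF assms]] by simp

lemma a_cc: assumes "Re s > 0" "n \<ge> 1" shows "a s n = (a s n - a s (Suc n)) * cc s n"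
proof -
  have "a s n - a s (Suc n) = a s n * (1 - exp (- L s n))"
    using a_Suc[OF assms(2), of s] by (simp add: L_def algebra_simps)
  thus ?thesis using one_minus_ne[OF assms] by (simp add: cc_def)
qed

lemma abel:
  assumes "Re s > 0" "M \<ge> 1"
  shows "(\<Sum>k\<le>j. a s (M+k)) = a s M * cc s M - a s (M+j+1) * cc s (M+j)
            + (\<Sum>k<j. a s (M+k+1) * (cc s (M+k+1) - cc s (M+k)))"
proof (induction j)
  case 0
  show ?case using a_cc[OF assms, of] by (simp add: algebra_simps)
next
  case (Suc j)
  define x where "x = a s (M+j+1)"
  define y where "y = a s (M+j+2)"
  define u where "u = cc s (M+j)"
  define v where "v = cc s (M+j+1)"
  define A where "A = a s M * cc s M"
  define B where "B = (\<Sum>k<j. a s (M+k+1) * (cc s (M+k+1) - cc s (M+k)))"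
  have e: "x = (x - y) * v"
    using a_cc[OF assms(1), of "M+j+1"] assms by (simp add: x_def y_def v_def)
  have "(\<Sum>k\<le>Suc j. a s (M+k)) = (\<Sum>k\<le>j. a s (M+k)) + x" by (simp add: x_def)
  also have "\<dots> = A - x * u + B + x" using Suc.IH by (simp add: A_def B_def x_def u_def)
  also have "\<dots> = A - x * u + B + (x - y) * v" using e by simp
  also have "\<dots> = A - y * v + (B + x * (v - u))" by (simp add: algebra_simps)
  also have "\<dots> = a s M * cc s M - a s (M + Suc j + 1) * cc s (M + Suc j)
            + (\<Sum>k<Suc j. a s (M+k+1) * (cc s (M+k+1) - cc s (M+k)))"
    by (simp add: A_def B_def x_def y_def u_def v_def)
  finally show ?case .
qed

lemma cc_dec: assumes "Re s > 0" "n \<ge> 1" shows "cc s n = 1 / L s n + 1/2 + hf (L s n)"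
  by (simp add: hf_def cc_def)

lemma ediff:
  assumes "Re s > 0" "n \<ge> 1"
  shows "cc s (Suc n) - cc s n - 1/s
         = of_real (1/ell (Suc n) - 1/ell n - 1) / s + (hf (L s (Suc n)) - hf (L s n))"
proof -
  have s0: "s \<noteq> 0" using assms by auto
  have e1: "ell (Suc n) \<noteq> 0" "ell n \<noteq> 0" using ell_pos[of n] ell_pos[of "Suc n"] assms by auto
  have "cc s (Suc n) - cc s n - 1/s = (1 / L s (Suc n) - 1 / L s n - 1/s) + (hf (L s (Suc n)) - hf (L s n))"
    using cc_dec[OF assms(1), of n] cc_dec[OF assms(1), of "Suc n"] assms by simp
  also have "1 / L s (Suc n) - 1 / L s n - 1/s = of_real (1/ell (Suc n) - 1/ell n - 1) / s"
    using s0 e1 by (simp add: L_def divide_simps)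
  finally show ?thesis .
qed

definition Dom :: "complex set" where "Dom = {z. 0 < Re z} \<inter> cball 0 (3/2)"

lemma hf_deriv: assumes "Re z > 0" shows "(hf has_field_derivative hfd z) (at z)"
proof -
  have z0: "z \<noteq> 0" using assms by auto
  have e0: "1 - exp (-z) \<noteq> 0" using exp_ne1[OF assms] by simp
  have "((\<lambda>z. 1/(1 - exp(-z)) - 1/z - 1/2) has_field_derivative
          (- (- (exp (-z) * (-1))) / (1 - exp(-z))^2 - (- 1 / z^2))) (at z)"
    using z0 e0 by (auto intro!: derivative_eq_intros simp: power2_eq_square)
  moreover have "(- (- (exp (-z) * (-1))) / (1 - exp(-z))^2 - (- 1 / z^2)) = hfd z"
    by (simp add: hfd_def)
  ultimately show ?thesis unfolding hf_def[abs_def] by simp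
qed

lemma hf_lip: assumes "z1 \<in> Dom" "z2 \<in> Dom" shows "norm (hf z1 - hf z2) \<le> 12/100 * norm (z1 - z2)"
proof (rule field_differentiable_bound[of Dom hf hfd])
  show "convex Dom" unfolding Dom_def by (intro convex_Int convex_halfspace_Re_gt convex_cball)
  fix z assume z: "z \<in> Dom"
  show "(hf has_field_derivative hfd z) (at z within Dom)"
    using z hf_deriv[of z] by (auto simp: Dom_def intro: has_field_derivative_at_within)
  show "norm (hfd z) \<le> 12/100"
  proof -
    have "z \<noteq> 0" using z by (auto simp: Dom_def)
    thus ?thesis using z hf_bounds(2)[of z] by (auto simp: Dom_def)
  qed
qed (use assms in auto)

lemma tele:
  fixes f :: "nat \<Rightarrow> complex" and G :: "nat \<Rightarrow> real"
  assumes fb: "\<And>k. norm (f k) \<le> G k - G (Suc k)" and G0: "G \<longlonglongrightarrow> 0"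
  shows "summable f" "norm (suminf f) \<le> G 0"
proof -
  have gs: "(\<lambda>k. G k - G (Suc k)) sums (G 0 - 0)" by (rule telescope_sums'[OF G0])
  hence sg: "summable (\<lambda>k. G k - G (Suc k))" by (simp add: sums_summable)
  have sn: "summable (\<lambda>k. norm (f k))"
    by (rule summable_comparison_test[OF _ sg]) (use fb in auto)
  show "summable f" by (rule summable_comparison_test[OF _ sg]) (use fb in auto)
  have "norm (suminf f) \<le> (\<Sum>k. norm (f k))" by (rule summable_norm[OF sn])
  also have "\<dots> \<le> (\<Sum>k. G k - G (Suc k))" by (rule suminf_le[OF fb sn sg])
  also have "\<dots> = G 0" using gs by (simp add: sums_iff)
  finally show "norm (suminf f) \<le> G 0" .
qed

lemma bern:
  fixes q x :: real
  assumes "q > 0" "x \<ge> 2"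
  shows "q * (x powr (-q) / x) \<le> (x - 1) powr (-q) - x powr (-q)"
proof -
  have x0: "x > 0" "x - 1 > 0" "1 - 1/x > 0" using assms by (auto simp: field_simps)
  have xx: "x * (1 - 1/x) = x - 1" using x0 by (simp add: right_diff_distrib)
  have "(x - 1) powr (-q) = (x * (1 - 1/x)) powr (-q)" by (simp only: xx)
  also have "\<dots> = x powr (-q) * (1 - 1/x) powr (-q)" using x0 by (simp add: powr_mult)
  finally have e1: "(x - 1) powr (-q) = x powr (-q) * (1 - 1/x) powr (-q)" .
  have "ln (1 - 1/x) \<le> (1 - 1/x) - 1" by (rule ln_le_minus_one) (use x0 in auto)
  hence l: "1/x \<le> - ln (1 - 1/x)" by simp
  have "q * (1/x) \<le> q * (- ln (1 - 1/x))" by (rule mult_left_mono[OF l]) (use assms in simp)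
  hence "1 + q/x \<le> 1 + (- q * ln (1 - 1/x))" by simp
  also have "\<dots> \<le> exp (- q * ln (1 - 1/x))" by (rule exp_ge_add_one_self)
  also have "\<dots> = (1 - 1/x) powr (-q)" using x0 by (simp add: powr_def)
  finally have "1 + q/x \<le> (1 - 1/x) powr (-q)" .
  hence "x powr (-q) * (1 + q/x) \<le> x powr (-q) * (1 - 1/x) powr (-q)"
    by (intro mult_left_mono) auto
  thus ?thesis unfolding e1 by (simp add: algebra_simps)
qed

lemma lim_powr_neg: assumes "c > 0" shows "(\<lambda>k. real (k + M) powr (- c)) \<longlonglongrightarrow> 0"
proof -
  have "(\<lambda>k. real k powr (- c)) \<longlonglongrightarrow> 0"
    by (rule tendsto_neg_powr[OF _ filterlim_real_sequentially]) (use assms in simp)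
  from LIMSEQ_ignore_initial_segment[OF this, of M] show ?thesis .
qed

lemma lim_ell: "(\<lambda>k. ell (k + M)) \<longlonglongrightarrow> 0"
proof -
  have "(\<lambda>k. ell k) \<longlonglongrightarrow> 0"
  proof (rule Lim_null_comparison[where g = "\<lambda>k. 1 / real k"])
    show "\<forall>\<^sub>F k in sequentially. norm (ell k) \<le> 1 / real k"
      using eventually_ge_at_top[of "1::nat"]
      by eventually_elim (use ell_le ell_pos in \<open>auto simp: less_imp_le\<close>)
    show "(\<lambda>k. 1 / real k) \<longlonglongrightarrow> 0" by (rule lim_const_over_n)
  qed
  from LIMSEQ_ignore_initial_segment[OF this, of M] show ?thesis .
qed

lemma rearr: fixes P Q x y c S d :: real
  shows "P*Q*(x-y)/S + P*(c*(S*d)) = P*(Q/S*(x-y) + c*S*d)"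
  by (simp add: distrib_left mult_ac)

lemma weight_bound:
  fixes \<sigma> :: real and M m :: nat
  assumes hs: "\<sigma> \<ge> 1/2" and M1: "M \<ge> 1" and m: "m \<ge> M"
  shows "real (Suc m) powr (-\<sigma>) * (1/(2*real (Suc m)))
         \<le> real M powr (-\<sigma>) * real M powr (1/2) * (real m powr (-1/2) - real (Suc m) powr (-1/2))"
proof -
  define n where "n = real (Suc m)"
  have n2: "n \<ge> 2" using m M1 by (simp add: n_def)
  have M0: "real M > 0" using M1 by simp
  have Mn: "real M \<le> n" using m by (simp add: n_def)
  have e1: "n powr (-\<sigma>) = n powr (-(\<sigma> - 1/2)) * n powr (-1/2)"
    by (simp add: powr_add[symmetric])
  have e2: "real M powr (-(\<sigma> - 1/2)) = real M powr (-\<sigma>) * real M powr (1/2)"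
    by (simp add: powr_add[symmetric])
  have b1: "n powr (-(\<sigma> - 1/2)) \<le> real M powr (-(\<sigma> - 1/2))"
    by (rule powr_mono2') (use hs M0 Mn in auto)
  have b2: "1/2 * (n powr (-1/2) / n) \<le> (n - 1) powr (-1/2) - n powr (-1/2)"
    using bern[of "1/2" n] n2 by simp
  have nm: "n - 1 = real m" by (simp add: n_def)
  have "n powr (-\<sigma>) * (1/(2*n)) = n powr (-(\<sigma> - 1/2)) * (1/2 * (n powr (-1/2) / n))"
    by (simp add: e1)
  also have "\<dots> \<le> real M powr (-(\<sigma> - 1/2)) * ((n - 1) powr (-1/2) - n powr (-1/2))"
    by (rule mult_mono[OF b1 b2]) (use n2 in auto)
  also have "\<dots> = real M powr (-\<sigma>) * real M powr (1/2) * (real m powr (-1/2) - n powr (-1/2))"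
    by (simp only: e2 nm)
  finally show ?thesis unfolding n_def .
qed

lemma term_bound:
  fixes s :: complex and M n :: nat
  assumes hs: "Re s \<ge> 1/2" and M1: "M \<ge> 1" and sM: "norm s \<le> 3/2 * real M" and n: "n \<ge> M + 1"
  shows "norm (a s n * (cc s n - cc s (n-1) - 1/s))
     \<le> real M powr (- Re s) * (real M powr (1/2) / norm s * (real (n-1) powr (-1/2) - real n powr (-1/2))
          + 12/100 * norm s * (ell (n-1) - ell n))"
proof -
  obtain m where nm: "n = Suc m" and mM: "m \<ge> M" using n by (metis Suc_eq_plus1 Suc_le_D Suc_le_mono)
  have m1: "m \<ge> 1" using mM M1 by simp
  have sp: "Re s > 0" using hs by simp
  have s0: "s \<noteq> 0" using sp by auto
  have ns: "norm s > 0" using s0 by simp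
  define \<delta> where "\<delta> = 1/ell (Suc m) - 1/ell m - 1"
  have E: "cc s n - cc s (n-1) - 1/s = of_real \<delta> / s + (hf (L s n) - hf (L s m))"
    using ediff[OF sp m1] by (simp add: nm \<delta>_def)
  have m2: "Suc m \<ge> 2" using m1 by simp
  have db: "\<bar>\<delta>\<bar> \<le> 1/(2*real n)"
    using delta_bound[OF m2] by (simp add: \<delta>_def nm)
  have Ln: "L s n \<in> Dom"
  proof -
    have "norm (L s n) \<le> norm s / real n" by (rule L_norm) (simp add: nm)
    also have "\<dots> \<le> norm s / real M" using n M1 by (intro divide_left_mono) auto
    also have "\<dots> \<le> 3/2" using sM M1 by (simp add: divide_simps)
    finally show ?thesis using L_re[OF sp, of n] by (simp add: Dom_def nm)
  qed
  have Lm: "L s m \<in> Dom"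
  proof -
    have "norm (L s m) \<le> norm s / real m" by (rule L_norm[OF m1])
    also have "\<dots> \<le> norm s / real M" using mM M1 by (intro divide_left_mono) auto
    also have "\<dots> \<le> 3/2" using sM M1 by (simp add: divide_simps)
    finally show ?thesis using L_re[OF sp m1] by (simp add: Dom_def)
  qed
  have ellm: "ell n \<le> ell m" using ell_mono[OF m1, of n] by (simp add: nm)
  have hb: "norm (hf (L s n) - hf (L s m)) \<le> 12/100 * (norm s * (ell m - ell n))"
  proof -
    have "norm (hf (L s n) - hf (L s m)) \<le> 12/100 * norm (L s n - L s m)" by (rule hf_lip[OF Ln Lm])
    also have "L s n - L s m = s * of_real (ell n - ell m)" by (simp add: L_def algebra_simps)
    also have "norm \<dots> = norm s * (ell m - ell n)"
      unfolding norm_mult norm_of_real using ellm by simp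
    finally show ?thesis .
  qed
  have Eb: "norm (cc s n - cc s (n-1) - 1/s) \<le> (1/(2*real n)) / norm s + 12/100 * (norm s * (ell m - ell n))"
  proof -
    have "norm (of_real \<delta> / s + (hf (L s n) - hf (L s m))) \<le> norm (of_real \<delta> / s) + norm (hf (L s n) - hf (L s m))"
      by (rule norm_triangle_ineq)
    also have "norm (of_real \<delta> / s) \<le> (1/(2*real n)) / norm s"
      unfolding norm_divide norm_of_real by (rule divide_right_mono[OF db]) (use ns in simp)
    finally show ?thesis using hb E by simp
  qed
  have an: "norm (a s n) = real n powr (- Re s)" by (rule a_norm) (simp add: nm)
  have w1: "real n powr (- Re s) \<le> real M powr (- Re s)"
    by (rule powr_mono2') (use hs M1 n in auto)
  have w2: "real n powr (- Re s) * (1/(2*real n)) \<le> real M powr (- Re s) * real M powr (1/2) * (real m powr (-1/2) - real n powr (-1/2))"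
    using weight_bound[OF hs M1 mM] by (simp add: nm)
  have "norm (a s n * (cc s n - cc s (n-1) - 1/s)) \<le> real n powr (- Re s) * ((1/(2*real n)) / norm s + 12/100 * (norm s * (ell m - ell n)))"
    unfolding norm_mult an by (rule mult_left_mono[OF Eb]) simp
  also have "\<dots> = (real n powr (- Re s) * (1/(2*real n))) / norm s + real n powr (- Re s) * (12/100 * (norm s * (ell m - ell n)))"
    by (simp add: algebra_simps)
  also have "\<dots> \<le> (real M powr (- Re s) * real M powr (1/2) * (real m powr (-1/2) - real n powr (-1/2))) / norm s
                 + real M powr (- Re s) * (12/100 * (norm s * (ell m - ell n)))"
    by (intro add_mono divide_right_mono w2 mult_right_mono w1) (use ns ellm in auto)
  also have "\<dots> = real M powr (- Re s) * (real M powr (1/2) / norm s * (real (n-1) powr (-1/2) - real n powr (-1/2))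
          + 12/100 * norm s * (ell (n-1) - ell n))"
    unfolding rearr by (simp add: nm)
  finally show ?thesis .
qed

definition Fz :: "complex \<Rightarrow> nat \<Rightarrow> complex" where
  "Fz s N = (\<Sum>n=1..N. 1 / (of_nat n powr s)) - of_nat N powr (1 - s) / (1 - s)"

lemma zeta_Fz: "riemann_zeta s = lim (Fz s)"
  unfolding riemann_zeta_def Fz_def by simp

lemma sum_split: assumes "M \<ge> 1"
  shows "(\<Sum>n=1..M+j. a s n) = (\<Sum>n\<in>{1..<M}. a s n) + (\<Sum>k\<le>j. a s (M+k))"
proof (induction j)
  case 0
  have "{1..M} = insert M {1..<M}" using assms by auto
  thus ?case by simp
next
  case (Suc j)
  thus ?case using assms by (simp add: add.assoc)
qed

lemma Fz_powr: "Fz s N = (\<Sum>n=1..N. a s n) - of_nat N powr (1 - s) / (1 - s)"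
  unfolding Fz_def using a_powr by (intro arg_cong2[where f = "(-)"] sum.cong) auto

lemma G2_bound:
  assumes hs: "Re s \<ge> 1/2" and N1: "N \<ge> 1" and sN: "norm s \<le> 3/2 * real N"
  shows "norm (s * a s (Suc N) * cc s N - of_nat N * a s N)
         \<le> real N powr (- Re s) * (1/2 + norm s / 2 + norm s * (11/100 * (3/2)))"
proof -
  have sp: "Re s > 0" using hs by simp
  have s0: "s \<noteq> 0" using sp by auto
  have e0: "ell N \<noteq> 0" using ell_pos[OF N1] by simp
  have om: "1 - exp (- L s N) \<noteq> 0" by (rule one_minus_ne[OF sp N1])
  have c1: "cc s N * exp (- L s N) = cc s N - 1"
    using om by (simp add: cc_def field_simps)
  have L0: "L s N \<noteq> 0" using L_re[OF sp N1] by auto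
  have eq: "s * a s (Suc N) * cc s N - of_nat N * a s N
            = a s N * (of_real (1/ell N - real N) - s/2 + s * hf (L s N))"
  proof -
    have r1: "s * a s (Suc N) * cc s N = s * a s N * (cc s N * exp (- L s N))"
      by (simp add: a_Suc[OF N1] L_def mult_ac)
    have r2: "s * (cc s N - 1) = of_real (1/ell N) - s/2 + s * hf (L s N)"
    proof -
      have "s * (cc s N - 1) = s * (1 / L s N) + s/2 + s * hf (L s N) - s"
        unfolding cc_dec[OF sp N1] by (simp add: algebra_simps)
      also have "s * (1 / L s N) = of_real (1 / ell N)" using s0 e0 by (simp add: L_def)
      finally show ?thesis by simp
    qed
    have "s * a s (Suc N) * cc s N - of_nat N * a s N = a s N * (s * (cc s N - 1)) - a s N * of_nat N"
      unfolding r1 c1 by (simp add: algebra_simps)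
    also have "\<dots> = a s N * (of_real (1/ell N) - s/2 + s * hf (L s N) - of_nat N)"
      unfolding r2 by (simp add: algebra_simps)
    also have "\<dots> = a s N * (of_real (1/ell N - real N) - s/2 + s * hf (L s N))"
      by simp
    finally show ?thesis .
  qed
  have d1: "\<bar>1/ell N - real N\<bar> \<le> 1/2"
  proof -
    have "1/ell N \<le> real N + 1/2" by (rule ell_inv_upper[OF N1])
    moreover have "real N + 1/2 - 1/(2*(2*real N+1)) \<le> 1/ell N" by (rule ell_inv_lower[OF N1])
    moreover have "1/(2*(2*real N+1)) \<le> 1/2" by (intro divide_left_mono) auto
    ultimately show ?thesis by linarith
  qed
  have LD: "norm (L s N) \<le> 3/2"
  proof -
    have "norm (L s N) \<le> norm s / real N" by (rule L_norm[OF N1])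
    also have "\<dots> \<le> 3/2" using sN N1 by (simp add: divide_simps)
    finally show ?thesis .
  qed
  have hb: "norm (hf (L s N)) \<le> 11/100 * (3/2)"
    using hf_bounds(1)[OF L0 LD] LD by simp
  have "norm (of_real (1/ell N - real N) - s/2 + s * hf (L s N))
        \<le> norm (of_real (1/ell N - real N) :: complex) + norm (s/2) + norm (s * hf (L s N))"
    using norm_triangle_ineq[of "of_real (1/ell N - real N) - s/2" "s * hf (L s N)"]
          norm_triangle_ineq4[of "of_real (1/ell N - real N) :: complex" "s/2"] by linarith
  also have "\<dots> \<le> 1/2 + norm s / 2 + norm s * (11/100 * (3/2))"
  proof (intro add_mono)
    show "norm (of_real (1/ell N - real N) :: complex) \<le> 1/2" unfolding norm_of_real by (rule d1)
    show "norm (s/2) \<le> norm s / 2" by (simp add: norm_divide)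
    show "norm (s * hf (L s N)) \<le> norm s * (11/100 * (3/2))" unfolding norm_mult
      by (rule mult_left_mono[OF hb]) simp
  qed
  finally have nb: "norm (of_real (1/ell N - real N) - s/2 + s * hf (L s N)) \<le> 1/2 + norm s / 2 + norm s * (11/100 * (3/2))" .
  show ?thesis unfolding eq norm_mult a_norm[OF N1]
    by (rule mult_left_mono[OF nb]) simp
qed

lemma solveX: fixes X aM c W Tj s :: complex
  assumes s0: "s \<noteq> 0" and s1: "s \<noteq> 1" and eq: "X = aM*c - W + Tj + (X - aM)/s"
  shows "X = s/(s-1)*(aM*(c - 1/s) + Tj) - s*W/(s-1)"
proof -
  have s1': "s - 1 \<noteq> 0" using s1 by simp
  have "X * s = (aM*c - W + Tj + (X - aM)/s) * s" using eq by simp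
  also have "\<dots> = (aM*c - W + Tj) * s + (X - aM)" using s0 by (simp add: distrib_right)
  finally have e1: "X * s = (aM*c - W + Tj) * s + (X - aM)" .
  have e2: "s * (aM*(c - 1/s)) = aM*c * s - aM" using s0 by (simp add: algebra_simps)
  have "X * (s - 1) = s * (aM*(c - 1/s) + Tj) - s*W"
    using e1 e2 by (simp add: algebra_simps)
  hence "X = (s * (aM*(c - 1/s) + Tj) - s*W) / (s - 1)" using s1' by (simp add: eq_divide_eq)
  thus ?thesis by (simp add: diff_divide_distrib)
qed
lemma final_eq: fixes P X s A Tj W Z :: complex
  assumes "X = s/(s-1)*(A + Tj) - s*W/(s-1)"
  shows "P + X - Z/(1-s) = P + s/(s-1)*(A + Tj) - (s*W - Z)/(s-1)"
proof -
  have "1 - s = -(s - 1)" by simp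
  hence "Z/(1-s) = - (Z/(s-1))" by (simp only: divide_minus_right)
  thus ?thesis using assms by (simp add: diff_divide_distrib)
qed

lemma rearr2: fixes P Q S c x0 x1 y0 y1 :: real
  shows "P*(Q/S*(x0 - x1) + c*S*(y0 - y1)) = P*(Q/S*x0 + c*S*y0) - P*(Q/S*x1 + c*S*y1)"
  by (simp add: algebra_simps diff_divide_distrib)

lemma main_conv:
  assumes hs: "Re s \<ge> 1/2" and M1: "M \<ge> 1" and sM: "norm s \<le> 3/2 * real M" and s1: "s \<noteq> 1"
  obtains T where "riemann_zeta s = (\<Sum>n\<in>{1..<M}. a s n) + s/(s-1) * (a s M * (cc s M - 1/s) + T)"
    and "norm T \<le> real M powr (- Re s) * (1/norm s + 12/100 * norm s * ell M)"
proof -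
  have sp: "Re s > 0" using hs by simp
  have s0: "s \<noteq> 0" using sp by auto
  have M0: "real M > 0" using M1 by simp
  define f where "f k = a s (M+k+1) * (cc s (M+k+1) - cc s (M+k) - 1/s)" for k
  define G where "G k = real M powr (-Re s) * (real M powr (1/2) / norm s * real (k+M) powr (-1/2)
                       + 12/100 * norm s * ell (k+M))" for k
  have fb: "norm (f k) \<le> G k - G (Suc k)" for k
  proof -
    have "norm (f k) \<le> real M powr (- Re s) * (real M powr (1/2) / norm s * (real (M+k+1-1) powr (-1/2) - real (M+k+1) powr (-1/2))
          + 12/100 * norm s * (ell (M+k+1-1) - ell (M+k+1)))"
      unfolding f_def using term_bound[OF hs M1 sM, of "M+k+1"] by simp
    also have "\<dots> = G k - G (Suc k)" unfolding rearr2 G_def by (simp add: add.commute)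
    finally show ?thesis .
  qed
  have G0: "G \<longlonglongrightarrow> 0"
  proof -
    have l1: "(\<lambda>k. real (k+M) powr (-1/2)) \<longlonglongrightarrow> 0" using lim_powr_neg[of "1/2" M] by simp
    have "G \<longlonglongrightarrow> real M powr (-Re s) * (real M powr (1/2) / norm s * 0 + 12/100 * norm s * 0)"
      unfolding G_def by (intro tendsto_intros l1 lim_ell)
    thus ?thesis by simp
  qed
  define T where "T = suminf f"
  have sf: "summable f" and Tb0: "norm T \<le> G 0" using tele[OF fb G0] by (auto simp: T_def)
  have "G 0 = real M powr (- Re s) * (1/norm s + 12/100 * norm s * ell M)"
  proof -
    have "real M powr (1/2) * real M powr (-1/2) = 1" using M0 by (simp add: powr_add[symmetric])
    thus ?thesis by (simp add: G_def)
  qed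
  hence Tb: "norm T \<le> real M powr (- Re s) * (1/norm s + 12/100 * norm s * ell M)" using Tb0 by simp
  define P where "P = (\<Sum>n\<in>{1..<M}. a s n)"
  define A where "A = a s M * (cc s M - 1/s)"
  define G2 where "G2 N = s * a s (Suc N) * cc s N - of_nat N * a s N" for N
  have ident: "Fz s (j + M) = P + s/(s-1)*(A + (\<Sum>k<j. f k)) - G2 (M+j)/(s-1)" for j
  proof -
    define N where "N = M + j"
    define X where "X = (\<Sum>k\<le>j. a s (M+k))"
    define W where "W = a s (N+1) * cc s N"
    have N1: "N \<ge> 1" using M1 by (simp add: N_def)
    have ab: "X = a s M * cc s M - W + (\<Sum>k<j. a s (M+k+1) * (cc s (M+k+1) - cc s (M+k)))"
      unfolding X_def W_def N_def by (rule abel[OF sp M1])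
    have B: "(\<Sum>k<j. a s (M+k+1) * (cc s (M+k+1) - cc s (M+k))) = (\<Sum>k<j. f k) + (\<Sum>k<j. a s (M+k+1)) / s"
      unfolding f_def by (simp add: sum.distrib[symmetric] sum_divide_distrib algebra_simps)
    have sh: "(\<Sum>k<j. a s (M+k+1)) = X - a s M"
      unfolding X_def by (subst sum.atMost_shift) simp
    have "X = a s M * cc s M - W + (\<Sum>k<j. f k) + (X - a s M)/s" using ab B sh by simp
    hence X: "X = s/(s-1)*(a s M*(cc s M - 1/s) + (\<Sum>k<j. f k)) - s*W/(s-1)"
      by (rule solveX[OF s0 s1])
    have "Fz s (j + M) = P + X - of_nat N * a s N / (1 - s)"
      unfolding Fz_powr using sum_split[OF M1, of s j] Npowr[OF N1, of s]
      by (simp add: N_def X_def P_def add.commute)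
    also have "\<dots> = P + s/(s-1)*(A + (\<Sum>k<j. f k)) - (s*W - of_nat N * a s N)/(s-1)"
      using final_eq[OF X] by (simp add: A_def)
    also have "s*W - of_nat N * a s N = G2 (M+j)" by (simp add: G2_def W_def N_def mult.assoc)
    finally show ?thesis .
  qed
  have G2lim: "(\<lambda>j. G2 (M+j)) \<longlonglongrightarrow> 0"
  proof (rule Lim_null_comparison)
    define B where "B = 1/2 + norm s / 2 + norm s * (11/100 * (3/2))"
    show "\<forall>\<^sub>F j in sequentially. norm (G2 (M+j)) \<le> real (j+M) powr (- Re s) * B"
    proof (rule always_eventually, rule allI)
      fix j
      have sN: "norm s \<le> 3/2 * real (M+j)" using sM by simp
      show "norm (G2 (M+j)) \<le> real (j+M) powr (- Re s) * B"
        using G2_bound[OF hs _ sN] M1 by (simp add: G2_def B_def add.commute)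
    qed
    show "(\<lambda>j. real (j+M) powr (- Re s) * B) \<longlonglongrightarrow> 0"
      by (rule tendsto_mult_left_zero[OF lim_powr_neg[OF sp]])
  qed
  have Tlim: "(\<lambda>j. \<Sum>k<j. f k) \<longlonglongrightarrow> T" unfolding T_def by (rule summable_LIMSEQ[OF sf])
  have "(\<lambda>j. Fz s (j + M)) \<longlonglongrightarrow> P + s/(s-1)*(A + T) - 0/(s-1)"
    unfolding ident by (intro tendsto_intros Tlim G2lim) (use s1 in simp)+
  hence "(\<lambda>j. Fz s (j + M)) \<longlonglongrightarrow> P + s/(s-1)*(A + T)" by simp
  hence "Fz s \<longlonglongrightarrow> P + s/(s-1)*(A + T)" by (rule LIMSEQ_offset)
  hence "riemann_zeta s = P + s/(s-1)*(A + T)" unfolding zeta_Fz by (rule limI)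
  show ?thesis
  proof (rule that[of T])
    show "riemann_zeta s = (\<Sum>n\<in>{1..<M}. a s n) + s/(s-1) * (a s M * (cc s M - 1/s) + T)"
      using \<open>riemann_zeta s = P + s/(s-1)*(A + T)\<close> unfolding P_def A_def .
  qed (rule Tb)
qed

lemma triv_conv:
  assumes s1: "Re s > 1" and M1: "M \<ge> 1"
  obtains T where "riemann_zeta s = (\<Sum>n\<in>{1..<M}. a s n) + a s M + T"
    and "norm T \<le> real M powr (1 - Re s) / (Re s - 1)"
proof -
  define q where "q = Re s - 1"
  have q0: "q > 0" using s1 by (simp add: q_def)
  define f where "f k = a s (M+k+1)" for k
  define G where "G k = real (k+M) powr (- q) / q" for k
  have fb: "norm (f k) \<le> G k - G (Suc k)" for k
  proof -
    define x where "x = real (M+k+1)"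
    have x2: "x \<ge> 2" using M1 by (simp add: x_def)
    have "norm (f k) = x powr (- Re s)" unfolding f_def x_def by (rule a_norm) simp
    also have "x powr (- Re s) = x powr (-q) / x"
    proof -
      have "x powr (- Re s) = x powr ((-q) - 1)" by (simp add: q_def)
      also have "\<dots> = x powr (-q) / x powr 1" by (rule powr_diff)
      also have "x powr 1 = x" using x2 by simp
      finally show ?thesis .
    qed
    also have "\<dots> \<le> ((x - 1) powr (-q) - x powr (-q)) / q"
      using bern[OF q0 x2] q0 by (simp add: field_simps)
    also have "\<dots> = G k - G (Suc k)" by (simp add: G_def x_def diff_divide_distrib add_ac)
    finally show ?thesis .
  qed
  have G0: "G \<longlonglongrightarrow> 0"
  proof -
    have "G \<longlonglongrightarrow> 0 / q" unfolding G_def by (intro tendsto_intros lim_powr_neg q0) (use q0 in simp)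
    thus ?thesis by simp
  qed
  define T where "T = suminf f"
  have sf: "summable f" and Tb0: "norm T \<le> G 0" using tele[OF fb G0] by (auto simp: T_def)
  have "G 0 = real M powr (1 - Re s) / (Re s - 1)" by (simp add: G_def q_def)
  hence Tb: "norm T \<le> real M powr (1 - Re s) / (Re s - 1)" using Tb0 by simp
  define P where "P = (\<Sum>n\<in>{1..<M}. a s n)"
  have s1': "1 - s \<noteq> 0" using s1 by auto
  have ident: "Fz s (j + M) = P + a s M + (\<Sum>k<j. f k) - of_nat (M+j) * a s (M+j) / (1 - s)" for j
  proof -
    have N1: "M + j \<ge> 1" using M1 by simp
    have "(\<Sum>k\<le>j. a s (M+k)) = a s M + (\<Sum>k<j. f k)"
      unfolding f_def by (subst sum.atMost_shift) simp
    thus ?thesis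
      unfolding Fz_powr using sum_split[OF M1, of s j] Npowr[OF N1, of s]
      by (simp add: P_def add.commute add.left_commute)
  qed
  have Nlim: "(\<lambda>j. of_nat (M+j) * a s (M+j)) \<longlonglongrightarrow> 0"
  proof (rule Lim_null_comparison)
    show "\<forall>\<^sub>F j in sequentially. norm (of_nat (M+j) * a s (M+j)) \<le> real (j+M) powr (- q)"
    proof (rule always_eventually, rule allI)
      fix j
      have N1: "M + j \<ge> 1" using M1 by simp
      have "norm (of_nat (M+j) * a s (M+j)) = real (M+j) * real (M+j) powr (- Re s)"
        by (simp only: norm_mult norm_of_nat a_norm[OF N1])
      also have "\<dots> = real (M+j) powr (- q)"
      proof -
        have e1: "real (M+j) powr (-q) = real (M+j) powr 1 * real (M+j) powr (-Re s)"
          unfolding powr_add[symmetric] by (simp add: q_def)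
        have e2: "real (M+j) powr 1 = real (M+j)" using N1 by simp
        show ?thesis unfolding e1 e2 ..
      qed
      finally show "norm (of_nat (M+j) * a s (M+j)) \<le> real (j+M) powr (- q)" by (simp add: add.commute)
    qed
    show "(\<lambda>j. real (j+M) powr (- q)) \<longlonglongrightarrow> 0" by (rule lim_powr_neg[OF q0])
  qed
  have Tlim: "(\<lambda>j. \<Sum>k<j. f k) \<longlonglongrightarrow> T" unfolding T_def by (rule summable_LIMSEQ[OF sf])
  have "(\<lambda>j. Fz s (j + M)) \<longlonglongrightarrow> P + a s M + T - 0 / (1 - s)"
    unfolding ident by (intro tendsto_intros Tlim Nlim) (use s1' in simp)+
  hence "(\<lambda>j. Fz s (j + M)) \<longlonglongrightarrow> P + a s M + T" by simp
  hence "Fz s \<longlonglongrightarrow> P + a s M + T" by (rule LIMSEQ_offset)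
  hence z: "riemann_zeta s = P + a s M + T" unfolding zeta_Fz by (rule limI)
  show ?thesis
  proof (rule that[of T])
    show "riemann_zeta s = (\<Sum>n\<in>{1..<M}. a s n) + a s M + T" using z unfolding P_def .
  qed (rule Tb)
qed

lemma rearr3a: fixes P m x u :: real
  shows "P*((m - 1/2)*x + 1/2 + 11/100*u) + P*(x + 12/100*u) = P*((m + 1/2)*x + 1/2 + 23/100*u)"
  by (simp add: algebra_simps)
lemma rearr3: fixes P m S u :: real
  shows "P*((m - 1/2)/S + 1/2 + 11/100*u) + P*(1/S + 12/100*u) = P*((m + 1/2)/S + 1/2 + 23/100*u)"
  using rearr3a[of P m "1/S" u] by simp

theorem mainTheorem3:
  fixes \<sigma> t :: real
  assumes "\<sigma> \<ge> 1/2" and "t \<ge> 14.1347"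
  shows "cmod (riemann_zeta (Complex \<sigma> t)
            - (\<Sum>n\<in>{n::nat. 1 \<le> n \<and> real n < t}. 1 / (of_nat n powr (Complex \<sigma> t))))
         \<le> 2.1946 * t powr (-\<sigma>)"
proof -
  define s where "s = Complex \<sigma> t"
  have Res: "Re s = \<sigma>" "Im s = t" by (simp_all add: s_def)
  have t0: "t > 0" using assms(2) by simp
  have sig0: "\<sigma> > 0" using assms(1) by simp
  define M where "M = nat \<lceil>t\<rceil>"
  have Mc: "real M = of_int \<lceil>t\<rceil>" using t0 by (simp add: M_def)
  have tM: "t \<le> real M" using Mc by simp
  have Mt1: "real M < t + 1" using Mc ceiling_correct[of t] by linarith
  have M1: "M \<ge> 1" using tM t0 by simp
  have setq: "{n::nat. 1 \<le> n \<and> real n < t} = {1..<M}"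
  proof -
    have iff: "real n < t \<longleftrightarrow> n < M" for n
    proof -
      have "n < M \<longleftrightarrow> int n < \<lceil>t\<rceil>" by (simp add: M_def zless_nat_eq_int_zless)
      also have "\<dots> \<longleftrightarrow> real n < t" by (simp add: less_ceiling_iff)
      finally show ?thesis by simp
    qed
    show ?thesis
    proof (rule set_eqI)
      fix n show "n \<in> {n::nat. 1 \<le> n \<and> real n < t} \<longleftrightarrow> n \<in> {1..<M}"
        using iff[of n] by simp
    qed
  qed
  have sumeq: "(\<Sum>n\<in>{n::nat. 1 \<le> n \<and> real n < t}. 1 / (of_nat n powr s)) = (\<Sum>n\<in>{1..<M}. a s n)"
    unfolding setq by (rule sum.cong[OF refl]) (rule a_powr, simp)
  define P where "P = (\<Sum>n\<in>{1..<M}. a s n)"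
  have Mt: "real M powr (-\<sigma>) \<le> t powr (-\<sigma>)" by (rule powr_mono2') (use sig0 t0 tM in auto)
  have aM: "norm (a s M) = real M powr (-\<sigma>)" using a_norm[OF M1, of s] Res by simp
  have ns2: "(norm s)^2 = \<sigma>^2 + t^2" using cmod_power2[of s] Res by simp
  have nst: "norm s \<ge> t"
  proof (rule power2_le_imp_le)
    show "t^2 \<le> (norm s)^2" using ns2 by simp
  qed simp
  have Mpos: "real M powr (-\<sigma>) \<ge> 0" by simp
  have goal: "norm (riemann_zeta s - P) \<le> 2.1946 * t powr (-\<sigma>)"
  proof (cases "\<sigma> \<le> t")
    case True
    have ns2M: "(norm s)^2 \<le> 2 * (real M)^2"
    proof -
      have "\<sigma>^2 \<le> t^2" using True sig0 by (intro power_mono) auto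
      moreover have "t^2 \<le> (real M)^2" using tM t0 by (intro power_mono) auto
      ultimately show ?thesis using ns2 by linarith
    qed
    have sq: "(14143/10000 * real M)^2 = 200024449/100000000 * (real M)^2"
      by (simp add: power2_eq_square)
    have "(norm s)^2 \<le> (14143/10000 * real M)^2"
      unfolding sq using ns2M zero_le_power2[of "real M"] by linarith
    hence sM14: "norm s \<le> 14143/10000 * real M"
      by (rule power2_le_imp_le) simp
    have sM: "norm s \<le> 3/2 * real M" using sM14 M1 by simp
    have s1: "s \<noteq> 1" using Res t0 by auto
    have hs: "Re s \<ge> 1/2" using Res assms(1) by simp
    obtain T where zT: "riemann_zeta s = P + s/(s-1) * (a s M * (cc s M - 1/s) + T)"
      and Tb: "norm T \<le> real M powr (- Re s) * (1/norm s + 12/100 * norm s * ell M)"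
      using main_conv[OF hs M1 sM s1] unfolding P_def by blast
    have sp: "Re s > 0" using hs by simp
    have s0: "s \<noteq> 0" using sp by auto
    have ns0: "norm s > 0" using s0 by simp
    have e0: "ell M > 0" by (rule ell_pos[OF M1])
    define u where "u = norm s * ell M"
    have LM: "norm (L s M) = u" using e0 by (simp add: L_def u_def norm_mult)
    have u14: "u \<le> 14143/10000"
    proof -
      have "u \<le> norm s * (1/real M)" unfolding u_def by (intro mult_left_mono ell_le M1) simp
      also have "\<dots> \<le> 14143/10000" using sM14 M1 by (simp add: divide_simps)
      finally show ?thesis .
    qed
    have L0: "L s M \<noteq> 0" using L_re[OF sp M1] by auto
    have LD: "norm (L s M) \<le> 3/2" using u14 LM by simp
    have hb: "norm (hf (L s M)) \<le> 11/100 * u" using hf_bounds(1)[OF L0 LD] LM by simp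
    have ie1: "1/ell M \<le> real M + 1/2" by (rule ell_inv_upper[OF M1])
    have ie2: "1/ell M \<ge> 1"
    proof -
      have "ell M \<le> 1/real M" by (rule ell_le[OF M1])
      moreover have "1/real M \<le> 1" using M1 by simp
      ultimately have "ell M \<le> 1" by linarith
      thus ?thesis using e0 by (simp add: divide_simps)
    qed
    have cdec: "cc s M - 1/s = of_real (1/ell M - 1)/s + 1/2 + hf (L s M)"
    proof -
      have "1 / L s M = of_real (1/ell M) / s" using s0 e0 by (simp add: L_def)
      thus ?thesis using cc_dec[OF sp M1] by (simp add: diff_divide_distrib)
    qed
    have cb: "norm (cc s M - 1/s) \<le> (real M - 1/2)/norm s + 1/2 + 11/100 * u"
    proof -
      have "norm (cc s M - 1/s) \<le> norm (of_real (1/ell M - 1)/s :: complex) + norm (1/2 :: complex) + norm (hf (L s M))"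
        unfolding cdec using norm_triangle_ineq[of "of_real (1/ell M - 1)/s + 1/2" "hf (L s M)"]
          norm_triangle_ineq[of "of_real (1/ell M - 1)/s" "1/2 :: complex"] by linarith
      also have "norm (of_real (1/ell M - 1)/s :: complex) = (1/ell M - 1)/norm s"
        unfolding norm_divide norm_of_real using ie2 by simp
      also have "(1/ell M - 1)/norm s \<le> (real M - 1/2)/norm s"
        using ie1 ns0 by (intro divide_right_mono) auto
      finally show ?thesis using hb by simp
    qed
    have K: "(real M + 1/2)/norm s \<le> 11062/10000"
    proof -
      have "(real M + 1/2)/norm s \<le> (t + 3/2)/t"
        using Mt1 nst t0 by (intro frac_le) auto
      also have "\<dots> = 1 + (3/2)/t" using t0 by (simp add: field_simps)
      also have "(3/2)/t \<le> (3/2)/14.1347" using assms(2) by (intro divide_left_mono) auto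
      finally have k1: "(real M + 1/2)/norm s \<le> 1 + (3/2)/14.1347" by simp
      have "(1::real) + (3/2)/14.1347 \<le> 11062/10000" by simp
      thus ?thesis using k1 by linarith
    qed
    have ratio: "norm (s/(s-1)) \<le> 104/100"
    proof -
      have s1n: "norm (s - 1) > 0" using s1 by simp
      have n1: "(norm (s - 1))^2 = (\<sigma> - 1)^2 + t^2" using cmod_power2[of "s-1"] Res by simp
      have "(norm s)^2 \<le> 108/100 * (norm (s-1))^2"
      proof -
        have "0 \<le> 8/100 * (\<sigma> - 27/2)^2" by simp
        moreover have "t^2 \<ge> 14.1347^2" using assms(2) by (intro power_mono) auto
        ultimately show ?thesis unfolding ns2 n1 by (simp add: power2_eq_square algebra_simps)
      qed
      hence b1: "(norm s)^2 \<le> 10816/10000 * (norm (s-1))^2"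
        using zero_le_power2[of "norm (s-1)"] by linarith
      have p104: "(104/100::real)^2 = 10816/10000" by (simp add: power2_eq_square)
      have "(norm (s/(s-1)))^2 = (norm s)^2 / (norm (s-1))^2" by (simp add: norm_divide power_divide)
      also have "\<dots> \<le> (104/100)^2" unfolding p104 using b1 s1n by (simp add: pos_divide_le_eq)
      finally have "(norm (s/(s-1)))^2 \<le> (104/100)^2" .
      thus ?thesis by (rule power2_le_imp_le) simp
    qed
    have eqn: "norm (riemann_zeta s - P) = norm (s/(s-1)) * norm (a s M * (cc s M - 1/s) + T)"
      unfolding zT by (simp only: add_diff_cancel_left' norm_mult)
    have X0: "norm (a s M * (cc s M - 1/s) + T) \<le> norm (a s M * (cc s M - 1/s)) + norm T" by (rule norm_triangle_ineq)
    have X1: "norm (a s M * (cc s M - 1/s)) \<le> real M powr (-\<sigma>) * ((real M - 1/2)/norm s + 1/2 + 11/100 * u)"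
      unfolding norm_mult aM by (rule mult_left_mono[OF cb]) simp
    have X2: "norm T \<le> real M powr (-\<sigma>) * (1/norm s + 12/100 * u)" using Tb Res by (simp add: u_def mult.assoc)
    have N1: "norm (a s M * (cc s M - 1/s) + T) \<le> real M powr (-\<sigma>) * ((real M + 1/2)/norm s + 1/2 + 23/100 * u)"
      using X0 X1 X2 rearr3[of "real M powr (-\<sigma>)" "real M" "norm s" u] by linarith
    have N2: "(real M + 1/2)/norm s + 1/2 + 23/100 * u \<le> 19315/10000" using K u14 by linarith
    have N3: "norm (a s M * (cc s M - 1/s) + T) \<le> real M powr (-\<sigma>) * (19315/10000)"
      using N1 mult_left_mono[OF N2 Mpos] by linarith
    have "norm (riemann_zeta s - P) \<le> 104/100 * (real M powr (-\<sigma>) * (19315/10000))"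
      unfolding eqn by (rule mult_mono[OF ratio N3]) simp_all
    also have "\<dots> \<le> 104/100 * (t powr (-\<sigma>) * (19315/10000))"
      using Mt by simp
    also have "\<dots> \<le> 2.1946 * t powr (-\<sigma>)" by simp
    finally show ?thesis .
  next
    case False
    have s1: "Re s > 1" using False assms(2) Res by simp
    obtain T where zT: "riemann_zeta s = P + a s M + T"
      and Tb: "norm T \<le> real M powr (1 - Re s) / (Re s - 1)"
      using triv_conv[OF s1 M1] unfolding P_def by blast
    have q0: "\<sigma> - 1 > 0" using s1 Res by simp
    have e: "real M powr (1 - \<sigma>) = real M * real M powr (-\<sigma>)"
    proof -
      have e1: "real M powr (1 - \<sigma>) = real M powr 1 * real M powr (-\<sigma>)"
        unfolding powr_add[symmetric] by simp
      have e2: "real M powr 1 = real M" using M1 by simp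
      show ?thesis unfolding e1 e2 ..
    qed
    have Mq: "real M / (\<sigma> - 1) \<le> 11523/10000"
    proof -
      have "real M / (\<sigma> - 1) \<le> (t + 1)/(t - 1)"
        using Mt1 False q0 t0 assms(2) by (intro frac_le) auto
      also have "\<dots> = 1 + 2/(t - 1)" using assms(2) by (simp add: field_simps)
      also have "2/(t-1) \<le> 2/(14.1347 - 1)" using assms(2) by (intro divide_left_mono) auto
      finally have k1: "real M / (\<sigma> - 1) \<le> 1 + 2/(14.1347 - 1)" by simp
      have "(1::real) + 2/(14.1347 - 1) \<le> 11523/10000" by simp
      thus ?thesis using k1 by linarith
    qed
    have "norm (riemann_zeta s - P) \<le> norm (a s M) + norm T"
      using zT norm_triangle_ineq[of "a s M" T] by simp
    also have "\<dots> \<le> real M powr (-\<sigma>) + real M * real M powr (-\<sigma>) / (\<sigma> - 1)"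
      using Tb aM Res e by simp
    also have "\<dots> = real M powr (-\<sigma>) * (1 + real M / (\<sigma> - 1))" by (simp add: algebra_simps)
    also have "\<dots> \<le> real M powr (-\<sigma>) * (1 + 11523/10000)"
      using Mq by (intro mult_left_mono) auto
    also have "\<dots> \<le> t powr (-\<sigma>) * (1 + 11523/10000)" using Mt by (intro mult_right_mono) auto
    also have "\<dots> \<le> 2.1946 * t powr (-\<sigma>)" by simp
    finally show ?thesis .
  qed
  thus ?thesis using sumeq by (simp add: s_def P_def)
qed

end
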